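(* Let $X$ be a finite set and $f\in\mathrm{Bool}(X)$ with $f(Y)\in\mathbb{N}$ for every $Y\subseteq X$. Then $\theta_1(f)$, defined by $\theta_1(f)(A)=\sum_{B\subseteq A}f(B)$, is rigid.
   Context: A boolean function on a finite set $X$ is a map $f:\mathcal{P}(X)\to\mathbb{Z}$ with $f(\emptyset)=0$; $\mathrm{Bool}(X)$ is their set; $f_{\mid Y}$ is the restriction to $\mathcal{P}(Y)$. For disjoint $X,Y$, $(f\star_1g)(A)=f(A\cap X)+g(A\cap Y)$. For nonempty $X$, $f$ is indecomposable if $f=f'\star_1f''$ with $f'\in\mathrm{Bool}(X\setminus Y)$, $f''\in\mathrm{Bool}(Y)$ forces $Y\in\{\emptyset,X\}$. Each $f$ determines a unique equivalence $\sim_f^i$ with $f=\prod^{\star_1}_{Y\in X/\sim_f^i}f_{\mid Y}$ and each $f_{\mid Y}$ indecomposable; its classes are the indecomposable components of $f$. An indecomposable $f\in\mathrm{Bool}(X)$ is rigid if for all disjoint $A,B\subseteq X$ with $f(A\sqcup B)=f(A)+f(B)$, one has $f(A'\sqcup B')=f(A')+f(B')$ for all $A'\subseteq A$, $B'\subseteq B$. A general $f\in\mathrm{Bool}(X)$ is rigid if $f_{\mid Y}$ is rigid for each indecomposable component $Y$ of $f$. *)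

theory Defs
  imports Main "HOL-Library.Disjoint_Sets"
begin

text \<open>A boolean function on the finite set X is modelled by f :: 'a set \<Rightarrow> int,
  of which only the values on subsets of X matter; the restriction to P(Y) is the
  same function considered on subsets of Y.\<close>

definition bool_fun :: "'a set \<Rightarrow> ('a set \<Rightarrow> int) \<Rightarrow> bool" where
  "bool_fun X f \<longleftrightarrow> f {} = 0"

definition star1 :: "'a set \<Rightarrow> ('a set \<Rightarrow> int) \<Rightarrow> 'a set \<Rightarrow> ('a set \<Rightarrow> int) \<Rightarrow> 'a set \<Rightarrow> int" where
  "star1 X f Y g = (\<lambda>A. f (A \<inter> X) + g (A \<inter> Y))"

definition indecomposable :: "'a set \<Rightarrow> ('a set \<Rightarrow> int) \<Rightarrow> bool" where
  "indecomposable X f \<longleftrightarrow> X \<noteq> {} \<and>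
     (\<forall>Y f' f''. Y \<subseteq> X \<and> bool_fun (X - Y) f' \<and> bool_fun Y f'' \<and>
        (\<forall>A. A \<subseteq> X \<longrightarrow> f A = star1 (X - Y) f' Y f'' A) \<longrightarrow> Y = {} \<or> Y = X)"

definition indec_components :: "'a set \<Rightarrow> ('a set \<Rightarrow> int) \<Rightarrow> 'a set set" where
  "indec_components X f = (THE P. partition_on X P \<and>
      (\<forall>A. A \<subseteq> X \<longrightarrow> f A = (\<Sum>Y\<in>P. f (A \<inter> Y))) \<and>
      (\<forall>Y\<in>P. indecomposable Y f))"

definition rigid_indec :: "'a set \<Rightarrow> ('a set \<Rightarrow> int) \<Rightarrow> bool" where
  "rigid_indec X f \<longleftrightarrow>
     (\<forall>A B. A \<subseteq> X \<and> B \<subseteq> X \<and> A \<inter> B = {} \<and> f (A \<union> B) = f A + f B \<longrightarrow>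
        (\<forall>A' B'. A' \<subseteq> A \<and> B' \<subseteq> B \<longrightarrow> f (A' \<union> B') = f A' + f B'))"

definition rigid :: "'a set \<Rightarrow> ('a set \<Rightarrow> int) \<Rightarrow> bool" where
  "rigid X f \<longleftrightarrow> (\<forall>Y\<in>indec_components X f. rigid_indec Y f)"

definition theta1 :: "('a set \<Rightarrow> int) \<Rightarrow> 'a set \<Rightarrow> int" where
  "theta1 f A = (\<Sum>B\<in>Pow A. f B)"

end

theory Submission
  imports Defs
begin

definition Mix :: "'a set \<Rightarrow> 'a set \<Rightarrow> 'a set set" where
  "Mix A B = {C. C \<subseteq> A \<union> B \<and> C \<inter> A \<noteq> {} \<and> C \<inter> B \<noteq> {}}"

lemma Mix_e: "Pow (A \<union> B) = (Pow A \<union> (Pow B - {{}})) \<union> Mix A B"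
  unfolding Mix_def by blast
lemma Mix_d1: "A \<inter> B = {} \<Longrightarrow> Pow A \<inter> (Pow B - {{}}) = {}" by blast
lemma Mix_d2: "A \<inter> B = {} \<Longrightarrow> (Pow A \<union> (Pow B - {{}})) \<inter> Mix A B = {}"
  unfolding Mix_def by blast
lemma Mix_sub: "Mix A B \<subseteq> Pow (A \<union> B)" unfolding Mix_def by blast

lemma theta_split:
  assumes "finite A" "finite B" "A \<inter> B = {}" "f {} = 0"
  shows "theta1 f (A \<union> B) = theta1 f A + theta1 f B + sum f (Mix A B)"
proof -
  have fin: "finite (Pow (A \<union> B))" using assms by simp
  have fM: "finite (Mix A B)" using finite_subset[OF Mix_sub fin] .
  have fA: "finite (Pow A)" "finite (Pow B - {{}})" using assms by simp_all
  have "theta1 f (A \<union> B) = sum f ((Pow A \<union> (Pow B - {{}})) \<union> Mix A B)"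
    unfolding theta1_def Mix_e ..
  also have "\<dots> = sum f (Pow A \<union> (Pow B - {{}})) + sum f (Mix A B)"
    using fA fM Mix_d2[OF assms(3)] by (intro sum.union_disjoint) simp_all
  also have "sum f (Pow A \<union> (Pow B - {{}})) = sum f (Pow A) + sum f (Pow B - {{}})"
    using fA Mix_d1[OF assms(3)] by (intro sum.union_disjoint) simp_all
  also have "sum f (Pow B - {{}}) = sum f (Pow B)"
    using assms by (simp add: sum_diff1)
  finally show ?thesis unfolding theta1_def by simp
qed

lemma rigid_theta:
  assumes fX: "finite X" and f0: "f {} = 0" and nn: "\<forall>Y. Y \<subseteq> X \<longrightarrow> f Y \<ge> 0" and YX: "Y \<subseteq> X"
  shows "rigid_indec Y (theta1 f)"
  unfolding rigid_indec_def
proof (intro allI impI)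
  fix A B A' B'
  assume h: "A \<subseteq> Y \<and> B \<subseteq> Y \<and> A \<inter> B = {} \<and> theta1 f (A \<union> B) = theta1 f A + theta1 f B"
    and h2: "A' \<subseteq> A \<and> B' \<subseteq> B"
  have AX: "A \<subseteq> X" "B \<subseteq> X" using h YX by blast+
  have fA: "finite A" "finite B" using finite_subset[OF AX(1) fX] finite_subset[OF AX(2) fX] .
  have fM: "finite (Mix A B)" by (rule finite_subset[OF Mix_sub]) (simp add: fA)
  have "sum f (Mix A B) = 0" using theta_split[of A B f, OF fA _ f0] h by simp
  moreover have "\<forall>C\<in>Mix A B. f C \<ge> 0"
  proof
    fix C assume "C \<in> Mix A B"
    hence "C \<subseteq> X" using Mix_sub AX by blast
    thus "f C \<ge> 0" using nn by blast
  qed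
  ultimately have z: "\<forall>C\<in>Mix A B. f C = 0" using sum_nonneg_eq_0_iff[OF fM] by blast
  have "Mix A' B' \<subseteq> Mix A B" using h2 unfolding Mix_def by blast
  hence "sum f (Mix A' B') = 0" using z by (intro sum.neutral) blast
  moreover have "finite A'" "finite B'" using finite_subset fA h2 by blast+
  moreover have "A' \<inter> B' = {}" using h h2 by blast
  ultimately show "theta1 f (A' \<union> B') = theta1 f A' + theta1 f B'"
    using theta_split[of A' B' f] f0 by simp
qed

definition dec :: "'a set \<Rightarrow> ('a set \<Rightarrow> int) \<Rightarrow> 'a set set \<Rightarrow> bool" where
  "dec X g P \<longleftrightarrow> partition_on X P \<and> (\<forall>A. A \<subseteq> X \<longrightarrow> g A = (\<Sum>Y\<in>P. g (A \<inter> Y)))"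

lemma part_disj: "partition_on X P \<Longrightarrow> Y \<in> P \<Longrightarrow> Z \<in> P \<Longrightarrow> Y \<noteq> Z \<Longrightarrow> Y \<inter> Z = {}"
  by (meson disjointD partition_onD2)

lemma dec_fin: "finite X \<Longrightarrow> partition_on X P \<Longrightarrow> finite P"
  using finite_UnionD partition_onD1 by blast

lemma L1:
  assumes g0: "g {} = 0" and fX: "finite X" and dQ: "dec X g Q" and YX: "Y \<subseteq> X"
    and ind: "indecomposable Y g" and ZQ: "Z \<in> Q"
  shows "Y \<inter> Z = {} \<or> Y \<subseteq> Z"
proof -
  have pQ: "partition_on X Q" and dq: "\<forall>A. A \<subseteq> X \<longrightarrow> g A = (\<Sum>W\<in>Q. g (A \<inter> W))"
    using dQ unfolding dec_def by auto
  have fQ: "finite Q" using dec_fin[OF fX pQ] .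
  have dqr: "g B = g (B \<inter> Z) + (\<Sum>W\<in>Q - {Z}. g (B \<inter> W))" if "B \<subseteq> X" for B
  proof -
    have "g B = (\<Sum>W\<in>Q. g (B \<inter> W))" using dq that by blast
    also have "\<dots> = g (B \<inter> Z) + (\<Sum>W\<in>Q - {Z}. g (B \<inter> W))"
      by (rule sum.remove[OF fQ ZQ])
    finally show ?thesis .
  qed
  have split: "g A = g (A \<inter> (Y - Y \<inter> Z)) + g (A \<inter> (Y \<inter> Z))" if AY: "A \<subseteq> Y" for A
  proof -
    have AX: "A \<subseteq> X" "A \<inter> (Y - Y \<inter> Z) \<subseteq> X" using AY YX by blast+
    have e1: "g A = g (A \<inter> Z) + (\<Sum>W\<in>Q - {Z}. g (A \<inter> W))"
      using dqr[OF AX(1)] .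
    have e2: "g (A \<inter> (Y - Y \<inter> Z)) = g (A \<inter> (Y - Y \<inter> Z) \<inter> Z) + (\<Sum>W\<in>Q - {Z}. g (A \<inter> (Y - Y \<inter> Z) \<inter> W))"
      using dqr[OF AX(2)] .
    have e3: "A \<inter> (Y - Y \<inter> Z) \<inter> Z = {}" by blast
    have e4: "(\<Sum>W\<in>Q - {Z}. g (A \<inter> (Y - Y \<inter> Z) \<inter> W)) = (\<Sum>W\<in>Q - {Z}. g (A \<inter> W))"
    proof (rule sum.cong)
      fix W assume "W \<in> Q - {Z}"
      hence "W \<inter> Z = {}" using part_disj[OF pQ _ ZQ] by blast
      hence "A \<inter> (Y - Y \<inter> Z) \<inter> W = A \<inter> W" using AY by blast
      thus "g (A \<inter> (Y - Y \<inter> Z) \<inter> W) = g (A \<inter> W)" by simp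
    qed simp
    have e5: "A \<inter> (Y \<inter> Z) = A \<inter> Z" using AY by blast
    show ?thesis using e1 e2 e3 e4 e5 g0 by simp
  qed
  have H: "\<forall>Y' f' f''. Y' \<subseteq> Y \<and> bool_fun (Y - Y') f' \<and> bool_fun Y' f'' \<and>
        (\<forall>A. A \<subseteq> Y \<longrightarrow> g A = star1 (Y - Y') f' Y' f'' A) \<longrightarrow> Y' = {} \<or> Y' = Y"
    using ind unfolding indecomposable_def by blast
  have "(\<forall>A. A \<subseteq> Y \<longrightarrow> g A = star1 (Y - Y \<inter> Z) g (Y \<inter> Z) g A)"
    using split unfolding star1_def by blast
  moreover have "bool_fun (Y - Y \<inter> Z) g" "bool_fun (Y \<inter> Z) g" using g0 by (auto simp: bool_fun_def)
  ultimately have "Y \<inter> Z = {} \<or> Y \<inter> Z = Y" using H[rule_format, of "Y \<inter> Z" g g] by blast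
  thus ?thesis by blast
qed

lemma uniq:
  assumes g0: "g {} = 0" and fX: "finite X" and dP: "dec X g P" and dQ: "dec X g Q"
    and iP: "\<forall>Y\<in>P. indecomposable Y g" and iQ: "\<forall>Z\<in>Q. indecomposable Z g"
  shows "P \<subseteq> Q"
proof
  fix Y assume YP: "Y \<in> P"
  have pP: "partition_on X P" and pQ: "partition_on X Q" using dP dQ by (auto simp: dec_def)
  have "Y \<noteq> {}" using YP pP partition_onD3 by blast
  then obtain x where xY: "x \<in> Y" by blast
  have YX: "Y \<subseteq> X" using YP pP partition_onD1 by blast
  then obtain Z where ZQ: "Z \<in> Q" and xZ: "x \<in> Z" using xY pQ partition_onD1 by blast
  have ZX: "Z \<subseteq> X" using ZQ pQ partition_onD1 by blast
  have YZ: "Y \<subseteq> Z" using L1[OF g0 fX dQ YX iP[rule_format, OF YP] ZQ] xY xZ by blast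
  obtain Y' where Y'P: "Y' \<in> P" and xY': "x \<in> Y'" using xZ ZX pP partition_onD1 by blast
  have ZY': "Z \<subseteq> Y'" using L1[OF g0 fX dP ZX iQ[rule_format, OF ZQ] Y'P] xZ xY' by blast
  have "Y = Y'" using part_disj[OF pP YP Y'P] xY xY' by blast
  thus "Y \<in> Q" using YZ ZY' ZQ by auto
qed


lemma exist:
  assumes g0: "g {} = 0" and fX: "finite X"
  shows "\<exists>P. dec X g P \<and> (\<forall>Y\<in>P. indecomposable Y g)"
proof -
  have k: "\<exists>P. dec X g P"
  proof (cases "X = {}")
    case True
    hence "dec X g {}" using g0 by (auto simp: dec_def partition_on_empty)
    thus ?thesis by blast
  next
    case False
    hence "dec X g {X}" by (auto simp: dec_def partition_on_space Int_absorb2)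
    thus ?thesis by blast
  qed
  then obtain P0 where "dec X g P0" by blast
  have bnd: "\<forall>P. dec X g P \<longrightarrow> card P < Suc (card (Pow X))"
  proof (intro allI impI)
    fix P assume "dec X g P"
    hence "P \<subseteq> Pow X" unfolding dec_def using partition_onD1 by blast
    hence "card P \<le> card (Pow X)" using fX by (intro card_mono) auto
    thus "card P < Suc (card (Pow X))" by simp
  qed
  obtain P where dP: "dec X g P" and mx: "\<forall>P'. dec X g P' \<longrightarrow> card P' \<le> card P"
    using Lattices_Big.ex_has_greatest_nat[of "dec X g" P0 card, OF \<open>dec X g P0\<close> bnd] by blast
  have pP: "partition_on X P" and dp: "\<forall>A. A \<subseteq> X \<longrightarrow> g A = (\<Sum>W\<in>P. g (A \<inter> W))"
    using dP unfolding dec_def by auto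
  have fP: "finite P" using dec_fin[OF fX pP] .
  have "\<forall>Y\<in>P. indecomposable Y g"
  proof (rule ccontr)
    assume "\<not> (\<forall>Y\<in>P. indecomposable Y g)"
    then obtain Y where YP: "Y \<in> P" and ni: "\<not> indecomposable Y g" by blast
    have Yne: "Y \<noteq> {}" using YP pP partition_onD3 by blast
    have YX: "Y \<subseteq> X" using YP pP partition_onD1 by blast
    obtain Y' f' f'' where Y'Y: "Y' \<subseteq> Y" and b1: "f' {} = 0" and b2: "f'' {} = 0"
      and sp0: "\<forall>A. A \<subseteq> Y \<longrightarrow> g A = f' (A \<inter> (Y - Y')) + f'' (A \<inter> Y')"
      and ne1: "Y' \<noteq> {}" and ne2: "Y' \<noteq> Y"
      using ni Yne unfolding indecomposable_def bool_fun_def star1_def by blast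
    have sp: "g A = g (A \<inter> (Y - Y')) + g (A \<inter> Y')" if "A \<subseteq> Y" for A
    proof -
      have B1: "A \<inter> (Y - Y') \<subseteq> Y" "A \<inter> (Y - Y') \<inter> (Y - Y') = A \<inter> (Y - Y')"
        "A \<inter> (Y - Y') \<inter> Y' = {}" using that by blast+
      have "g (A \<inter> (Y - Y')) = f' (A \<inter> (Y - Y')) + f'' {}"
        using sp0[rule_format, OF B1(1)] unfolding B1(2) B1(3) .
      moreover have "g (A \<inter> Y') = f' {} + f'' (A \<inter> Y')"
      proof -
        have B2: "A \<inter> Y' \<subseteq> Y" "A \<inter> Y' \<inter> (Y - Y') = {}" "A \<inter> Y' \<inter> Y' = A \<inter> Y'"
          using that by blast+
        show ?thesis using sp0[rule_format, OF B2(1)] unfolding B2(2) B2(3) .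
      qed
      ultimately show ?thesis using sp0 that b1 b2 by simp
    qed
    have Y1P: "Y' \<notin> P"
    proof
      assume "Y' \<in> P"
      hence "Y' \<inter> Y = {}" using part_disj[OF pP _ YP] ne2 by blast
      thus False using Y'Y ne1 by blast
    qed
    have Y2P: "Y - Y' \<notin> P"
    proof
      assume "Y - Y' \<in> P"
      moreover have "Y - Y' \<noteq> Y" using Y'Y ne1 by blast
      ultimately have "(Y - Y') \<inter> Y = {}" using part_disj[OF pP _ YP] by blast
      thus False using Y'Y ne2 by blast
    qed
    have ne12: "Y - Y' \<noteq> Y'" using ne1 by blast
    define P' where "P' = insert (Y - Y') (insert Y' (P - {Y}))"
    have fP': "finite P'" using fP unfolding P'_def by simp
    have cP': "card P' = Suc (card P)"
    proof -
      have "card P' = Suc (Suc (card (P - {Y})))"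
        unfolding P'_def using fP Y1P Y2P ne12 by simp
      moreover have "card (P - {Y}) = card P - 1" using fP YP by simp
      moreover have "card P \<ge> 1" using fP YP card_0_eq by fastforce
      ultimately show ?thesis by simp
    qed
    have dis: "W \<inter> Y = {}" if "W \<in> P - {Y}" for W using part_disj[OF pP _ YP] that by blast
    have pP': "partition_on X P'"
    proof (rule partition_onI)
      show "\<Union> P' = X"
      proof -
        have "\<Union> P = X" using pP partition_onD1 by blast
        moreover have "\<Union> P' = \<Union> (P - {Y}) \<union> Y" unfolding P'_def using Y'Y by blast
        moreover have "\<Union> P = \<Union> (P - {Y}) \<union> Y" using YP by blast
        ultimately show ?thesis by simp
      qed
    next
      fix p q assume "p \<in> P'" "q \<in> P'" "p \<noteq> q"
      hence cp: "p \<in> P - {Y} \<or> p = Y - Y' \<or> p = Y'" and cq: "q \<in> P - {Y} \<or> q = Y - Y' \<or> q = Y'"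
        unfolding P'_def by blast+
      have "p \<inter> q = {}"
      proof (cases "p \<in> P - {Y}")
        case True
        note pT = True
        show ?thesis
        proof (cases "q \<in> P - {Y}")
          case True
          thus ?thesis using pT part_disj[OF pP] \<open>p \<noteq> q\<close> by blast
        next
          case False
          hence "q \<subseteq> Y" using cq Y'Y by blast
          thus ?thesis using dis[OF pT] by blast
        qed
      next
        case False
        hence pY: "p \<subseteq> Y" using cp Y'Y by blast
        show ?thesis
        proof (cases "q \<in> P - {Y}")
          case True
          thus ?thesis using dis[OF True] pY by blast
        next
          case False
          thus ?thesis using cp cq \<open>p \<notin> P - {Y}\<close> \<open>p \<noteq> q\<close> by blast
        qed
      qed
      thus "disjnt p q" unfolding disjnt_def .
    next
      show "{} \<notin> P'" unfolding P'_def using ne1 ne2 Y'Y pP partition_onD3 by blast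
    qed
    have "dec X g P'"
      unfolding dec_def
    proof (intro conjI allI impI pP')
      fix A assume AX: "A \<subseteq> X"
      have "(\<Sum>W\<in>P'. g (A \<inter> W)) = g (A \<inter> (Y - Y')) + (g (A \<inter> Y') + (\<Sum>W\<in>P - {Y}. g (A \<inter> W)))"
        unfolding P'_def using fP Y1P Y2P ne12 by simp
      also have "g (A \<inter> (Y - Y')) + g (A \<inter> Y') = g (A \<inter> Y)"
      proof -
        have C: "A \<inter> Y \<subseteq> Y" "A \<inter> Y \<inter> (Y - Y') = A \<inter> (Y - Y')" "A \<inter> Y \<inter> Y' = A \<inter> Y'"
          using Y'Y by blast+
        show ?thesis using sp[OF C(1)] unfolding C(2) C(3) by simp
      qed
      hence "g (A \<inter> (Y - Y')) + (g (A \<inter> Y') + (\<Sum>W\<in>P - {Y}. g (A \<inter> W))) = g (A \<inter> Y) + (\<Sum>W\<in>P - {Y}. g (A \<inter> W))"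
        by simp
      also have "\<dots> = (\<Sum>W\<in>P. g (A \<inter> W))" using sum.remove[OF fP YP, of "\<lambda>W. g (A \<inter> W)"] by simp
      also have "\<dots> = g A" using dp AX by simp
      finally show "g A = (\<Sum>W\<in>P'. g (A \<inter> W))" by simp
    qed
    hence "card P' \<le> card P" using mx by blast
    thus False using cP' by simp
  qed
  thus ?thesis using dP by blast
qed

theorem proposition4p10:
  fixes X :: "'a set" and f :: "'a set \<Rightarrow> int"
  assumes "finite X"
    and "bool_fun X f"
    and "\<forall>Y. Y \<subseteq> X \<longrightarrow> f Y \<ge> 0"
  shows "rigid X (theta1 f)"
proof -
  have f0: "f {} = 0" using assms(2) by (simp add: bool_fun_def)
  have g0: "theta1 f {} = 0" using f0 by (simp add: theta1_def)
  obtain P where dP: "dec X (theta1 f) P" and iP: "\<forall>Y\<in>P. indecomposable Y (theta1 f)"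
    using exist[of "theta1 f" X, OF g0 assms(1)] by blast
  have "indec_components X (theta1 f) = P"
    unfolding indec_components_def
  proof (rule the_equality)
    show "partition_on X P \<and> (\<forall>A. A \<subseteq> X \<longrightarrow> theta1 f A = (\<Sum>Y\<in>P. theta1 f (A \<inter> Y))) \<and>
      (\<forall>Y\<in>P. indecomposable Y (theta1 f))" using dP iP unfolding dec_def by blast
  next
    fix Q assume "partition_on X Q \<and> (\<forall>A. A \<subseteq> X \<longrightarrow> theta1 f A = (\<Sum>Y\<in>Q. theta1 f (A \<inter> Y))) \<and>
      (\<forall>Y\<in>Q. indecomposable Y (theta1 f))"
    hence dQ: "dec X (theta1 f) Q" and iQ: "\<forall>Y\<in>Q. indecomposable Y (theta1 f)"
      unfolding dec_def by blast+
    show "Q = P" using uniq[OF g0 assms(1) dQ dP iQ iP] uniq[OF g0 assms(1) dP dQ iP iQ] by blast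
  qed
  moreover have "\<forall>Y\<in>P. Y \<subseteq> X" using dP unfolding dec_def using partition_onD1 by blast
  ultimately show ?thesis unfolding rigid_def
    using rigid_theta[OF assms(1) f0 assms(3)] by auto
qed

end
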